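(* Let $\ket\psi$ be a pure $n$-qubit state and $t\ge1$. With $p_t$ the output distribution of the $t$-copy hidden cut circuit on $\ket\psi$, we have $p_t = p_1^{\ast t} = p_1\ast\cdots\ast p_1$ ($t$ factors), where $(f\ast g)(\bm x)=\sum_{\bm x'\in\{0,1\}^n} f(\bm x')\,g(\bm x\oplus\bm x')$. Equivalently $p_t=\mathcal F^{-1}\bigl[\mathcal F[p_1]^t\bigr]$ with $\mathcal F[f](\bm s)=\sum_{\bm x}(-1)^{\bm x\cdot\bm s}f(\bm x)$ and $\mathcal F^{-1}[\hat f](\bm x)=2^{-n}\sum_{\bm s}(-1)^{\bm x\cdot\bm s}\hat f(\bm s)$.
   Context: $\oplus$ is bitwise addition mod 2, and $\bm x\cdot\bm s$ is the dot product mod 2. $\mathrm{SWAP}_{\bm s}$ acts on two copies of the $n$-qubit space by swapping the qubits of subsystem $\bm s$ (bitstring $\bm s\in\{0,1\}^n$, qubit $j$ included iff $s_j=1$) between the copies. The $t$-copy hidden cut circuit: an $n$-qubit group register is initialized to $\ket{0^n}$ and a state register to $(\ket\psi\ket\psi)^{\otimes t}$; apply $H^{\otimes n}$ to the group register; apply $\sum_{\bm s}\ket{\bm s}\bra{\bm s}\otimes \mathrm{SWAP}_{\bm s}^{\otimes t}$; apply $H^{\otimes n}$ to the group register; measure the group register in the computational basis; $p_t$ denotes the resulting distribution. *)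

theory Defs
  imports Complex_Main "HOL-Library.FuncSet"
begin

text \<open>n-bit strings are boolean lists of length n (entry j = qubit j).\<close>
definition bits :: "nat \<Rightarrow> bool list set" where
  "bits n = {x. length x = n}"

definition bxor :: "bool list \<Rightarrow> bool list \<Rightarrow> bool list" where
  "bxor x y = map2 (\<noteq>) x y"

text \<open>Number of positions where both strings are 1; the dot product mod 2 is its parity,
  so the sign (-1)^(x.s) equals (-1)^(bdot x s).\<close>
definition bdot :: "bool list \<Rightarrow> bool list \<Rightarrow> nat" where
  "bdot x s = length (filter id (map2 (\<and>) x s))"

text \<open>Qubits of copy a, with the qubits in subsystem s replaced by those of copy b.\<close>
definition swap_first :: "bool list \<Rightarrow> bool list \<Rightarrow> bool list \<Rightarrow> bool list" where
  "swap_first s a b = map (\<lambda>(sj, aj, bj). if sj then bj else aj) (zip s (zip a b))"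

text \<open>Basis of the state register: 2t copies of n qubits, copies (2k, 2k+1) form the k-th pair.\<close>
definition reg_basis :: "nat \<Rightarrow> nat \<Rightarrow> (nat \<Rightarrow> bool list) set" where
  "reg_basis n t = PiE {..<2*t} (\<lambda>_. bits n)"

text \<open>Action of SWAP_s^{\<otimes>t} on a basis state of the state register
  (a permutation of the basis, which is an involution).\<close>
definition swap_reg :: "nat \<Rightarrow> bool list \<Rightarrow> (nat \<Rightarrow> bool list) \<Rightarrow> (nat \<Rightarrow> bool list)" where
  "swap_reg t s r = (\<lambda>k. if k < 2*t then
       (if even k then swap_first s (r k) (r (Suc k)) else swap_first s (r k) (r (k - 1)))
     else r k)"

text \<open>Joint states: amplitude functions (group basis x, register basis r) \<mapsto> amplitude.\<close>
type_synonym jstate = "bool list \<Rightarrow> (nat \<Rightarrow> bool list) \<Rightarrow> complex"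

definition init_state :: "nat \<Rightarrow> nat \<Rightarrow> (bool list \<Rightarrow> complex) \<Rightarrow> jstate" where
  "init_state n t \<psi> x r =
     (if x = replicate n False then 1 else 0) * (\<Prod>k<2*t. \<psi> (r k))"

definition hadamard_grp :: "nat \<Rightarrow> jstate \<Rightarrow> jstate" where
  "hadamard_grp n v x r =
     complex_of_real (1 / sqrt (2 ^ n)) * (\<Sum>s\<in>bits n. (-1) ^ bdot x s * v s r)"

text \<open>Controlled swap \<Sum>_s |s><s| \<otimes> SWAP_s^{\<otimes>t}.\<close>
definition ctrl_swap :: "nat \<Rightarrow> jstate \<Rightarrow> jstate" where
  "ctrl_swap t v s r = v s (swap_reg t s r)"

definition hidden_cut_final :: "nat \<Rightarrow> nat \<Rightarrow> (bool list \<Rightarrow> complex) \<Rightarrow> jstate" where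
  "hidden_cut_final n t \<psi> =
     hadamard_grp n (ctrl_swap t (hadamard_grp n (init_state n t \<psi>)))"

definition hidden_cut_dist :: "nat \<Rightarrow> nat \<Rightarrow> (bool list \<Rightarrow> complex) \<Rightarrow> bool list \<Rightarrow> real" where
  "hidden_cut_dist n t \<psi> x = (\<Sum>r\<in>reg_basis n t. (cmod (hidden_cut_final n t \<psi> x r))\<^sup>2)"

definition conv :: "nat \<Rightarrow> (bool list \<Rightarrow> real) \<Rightarrow> (bool list \<Rightarrow> real) \<Rightarrow> bool list \<Rightarrow> real" where
  "conv n f g x = (\<Sum>x'\<in>bits n. f x' * g (bxor x x'))"

primrec conv_pow :: "nat \<Rightarrow> (bool list \<Rightarrow> real) \<Rightarrow> nat \<Rightarrow> bool list \<Rightarrow> real" where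
  "conv_pow n f 0 = (\<lambda>x. if x = replicate n False then 1 else 0)"
| "conv_pow n f (Suc k) = conv n f (conv_pow n f k)"

definition fourier :: "nat \<Rightarrow> (bool list \<Rightarrow> real) \<Rightarrow> bool list \<Rightarrow> real" where
  "fourier n f s = (\<Sum>x\<in>bits n. (-1) ^ bdot x s * f x)"

definition ifourier :: "nat \<Rightarrow> (bool list \<Rightarrow> real) \<Rightarrow> bool list \<Rightarrow> real" where
  "ifourier n fh x = (1 / 2 ^ n) * (\<Sum>s\<in>bits n. (-1) ^ bdot x s * fh s)"

end

theory Submission
  imports Defs
begin

lemma bdot_Cons[simp]: "bdot (a#x) (b#s) = (if a \<and> b then Suc (bdot x s) else bdot x s)"
  by (simp add: bdot_def)
lemma bdot_Nil1[simp]: "bdot [] s = 0" by (simp add: bdot_def)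
lemma bdot_Nil2[simp]: "bdot x [] = 0" by (simp add: bdot_def)
lemma bxor_Cons[simp]: "bxor (a#x) (b#y) = (a \<noteq> b) # bxor x y" by (simp add: bxor_def)
lemma bxor_Nil1[simp]: "bxor [] y = []" by (simp add: bxor_def)
lemma bxor_Nil2[simp]: "bxor x [] = []" by (simp add: bxor_def)
lemma length_bxor[simp]: "length (bxor x y) = min (length x) (length y)" by (simp add: bxor_def)
lemma swap_first_Cons[simp]: "swap_first (c#s) (a#x) (b#y) = (if c then b else a) # swap_first s x y"
  by (simp add: swap_first_def)
lemma swap_first_Nil[simp]: "swap_first [] x y = []" "swap_first s [] y = []" "swap_first s x [] = []"
  by (simp_all add: swap_first_def)
lemma length_swap_first[simp]: "length (swap_first s a b) = min (length s) (min (length a) (length b))"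
  by (simp add: swap_first_def)

lemma bits_Suc: "bits (Suc n) = Cons True ` bits n \<union> Cons False ` bits n"
  by (auto simp: bits_def length_Suc_conv image_iff)

lemma bits_0[simp]: "bits 0 = {[]}" by (auto simp: bits_def)

lemma finite_bits[simp]: "finite (bits n)"
  by (induction n) (simp_all add: bits_Suc)

lemma sum_bits_Suc: "(\<Sum>x\<in>bits (Suc n). f x) = (\<Sum>x\<in>bits n. f (True#x) + f (False#x))"
proof -
  have "(\<Sum>x\<in>bits (Suc n). f x) = (\<Sum>x\<in>Cons True ` bits n. f x) + (\<Sum>x\<in>Cons False ` bits n. f x)"
    unfolding bits_Suc by (rule sum.union_disjoint) auto
  also have "\<dots> = (\<Sum>x\<in>bits n. f (True#x)) + (\<Sum>x\<in>bits n. f (False#x))"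
    by (simp add: sum.reindex)
  finally show ?thesis by (simp add: sum.distrib)
qed

lemma card_bits: "card (bits n) = 2^n"
proof (induction n)
  case (Suc n)
  have "card (bits (Suc n)) = card (Cons True ` bits n) + card (Cons False ` bits n)"
    unfolding bits_Suc by (rule card_Un_disjoint) auto
  also have "\<dots> = 2 * card (bits n)" by (simp add: card_image)
  finally show ?case using Suc by simp
qed simp

lemma bits_mem: "x \<in> bits n \<longleftrightarrow> length x = n" by (simp add: bits_def)

lemma sign_bxor: "length s = length u \<Longrightarrow>
   (-1::'a::ring_1)^bdot x (bxor s u) = (-1)^bdot x s * (-1)^bdot x u"
proof (induction s arbitrary: x u)
  case (Cons c s)
  then obtain d u' where u: "u = d#u'" by (cases u) auto
  show ?case
  proof (cases x)
    case (Cons a x')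
    then show ?thesis using Cons.IH[of u' x'] Cons.prems u by auto
  qed simp
qed simp

lemma bdot_comm: "bdot x s = bdot s x"
proof (induction x arbitrary: s)
  case (Cons a x) then show ?case by (cases s) auto
qed simp

lemma sign_bxor1: "length s = length u \<Longrightarrow>
   (-1::'a::ring_1)^bdot (bxor s u) x = (-1)^bdot s x * (-1)^bdot u x"
  using sign_bxor[of s u x] by (simp add: bdot_comm)

lemma bdot_rep1[simp]: "bdot (replicate n False) s = 0"
proof (induction n arbitrary: s)
  case (Suc n) then show ?case by (cases s) auto
qed simp
lemma bdot_rep2[simp]: "bdot s (replicate n False) = 0"
  using bdot_rep1 bdot_comm by metis

lemma bxor_eq_rep: "length s = length u \<Longrightarrow> (bxor s u = replicate (length s) False) = (s = u)"
proof (induction s arbitrary: u)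
  case (Cons c s) then show ?case by (cases u) auto
qed simp

lemma bxor_comm: "bxor x y = bxor y x"
proof (induction x arbitrary: y)
  case (Cons a x) then show ?case by (cases y) auto
qed simp

lemma bxor_inv: "length x = length y \<Longrightarrow> bxor x (bxor x y) = y"
proof (induction x arbitrary: y)
  case (Cons c s) then show ?case by (cases y) auto
qed simp

lemma sum_bxor_reindex: "a \<in> bits n \<Longrightarrow> (\<Sum>y\<in>bits n. h (bxor a y)) = (\<Sum>y\<in>bits n. h y)"
  by (rule sum.reindex_bij_witness[of _ "bxor a" "bxor a"]) (auto simp: bxor_inv bits_mem)

lemma orth: "u \<in> bits n \<Longrightarrow>
  (\<Sum>x\<in>bits n. (-1::'a::comm_ring_1)^bdot x u) = (if u = replicate n False then 2^n else 0)"
proof (induction n arbitrary: u)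
  case 0 then show ?case by simp
next
  case (Suc n)
  then obtain b u' where u: "u = b#u'" "u' \<in> bits n" by (cases u) (auto simp: bits_mem)
  have "(\<Sum>x\<in>bits (Suc n). (-1::'a)^bdot x u) =
     (\<Sum>x\<in>bits n. (if b then -((-1)^bdot x u') else (-1)^bdot x u') + (-1)^bdot x u')"
    by (cases b) (simp_all add: sum_bits_Suc u)
  also have "\<dots> = (if b then 0 else 2 * (\<Sum>x\<in>bits n. (-1::'a)^bdot x u'))"
  proof (cases b)
    case True then show ?thesis by simp
  next
    case False then show ?thesis by (simp only: if_False sum.distrib mult_2 simp_thms)
  qed
  finally show ?case using Suc.IH[OF u(2)] u by auto
qed

lemma orth2: "s \<in> bits n \<Longrightarrow> u \<in> bits n \<Longrightarrow>
  (\<Sum>x\<in>bits n. (-1::'a::comm_ring_1)^bdot x s * (-1)^bdot x u) = (if s = u then 2^n else 0)"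
proof -
  assume s: "s \<in> bits n" and u: "u \<in> bits n"
  have "(\<Sum>x\<in>bits n. (-1::'a)^bdot x s * (-1)^bdot x u) = (\<Sum>x\<in>bits n. (-1::'a)^bdot x (bxor s u))"
    using s u by (simp add: sign_bxor bits_mem)
  also have "\<dots> = (if s = u then 2^n else 0)"
    using orth[of "bxor s u" n] s u bxor_eq_rep[of s u] by (simp add: bits_mem)
  finally show ?thesis .
qed

lemma Gsum: "s \<in> bits n \<Longrightarrow>
  (\<Sum>x\<in>bits n. (-1::'a::comm_ring_1)^bdot x s * (\<Sum>u\<in>bits n. (-1)^bdot x u * h u)) = 2^n * h s"
proof -
  assume s: "s \<in> bits n"
  have "(\<Sum>x\<in>bits n. (-1::'a)^bdot x s * (\<Sum>u\<in>bits n. (-1)^bdot x u * h u))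
      = (\<Sum>x\<in>bits n. \<Sum>u\<in>bits n. ((-1::'a)^bdot x s * (-1)^bdot x u) * h u)"
    by (simp add: sum_distrib_left mult.assoc)
  also have "\<dots> = (\<Sum>u\<in>bits n. (\<Sum>x\<in>bits n. (-1::'a)^bdot x s * (-1)^bdot x u) * h u)"
    by (subst sum.swap) (simp add: sum_distrib_right)
  also have "\<dots> = (\<Sum>u\<in>bits n. if s = u then 2^n * h u else 0)"
    by (rule sum.cong) (auto simp: orth2 s)
  also have "\<dots> = 2^n * h s" using s by simp
  finally show ?thesis .
qed

lemma Gsum2: "x \<in> bits n \<Longrightarrow>
  (\<Sum>s\<in>bits n. (-1::'a::comm_ring_1)^bdot x s * (\<Sum>y\<in>bits n. (-1)^bdot y s * h y)) = 2^n * h x"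
  using Gsum[of x n h] by (simp add: bdot_comm)

lemma ifourier_fourier: "x \<in> bits n \<Longrightarrow> ifourier n (fourier n f) x = f x"
  unfolding ifourier_def fourier_def using Gsum2[of x n f] by simp

lemma fourier_conv: "fourier n (conv n f g) s = fourier n f s * fourier n g s"
proof -
  have inner: "(\<Sum>x\<in>bits n. (-1)^bdot x s * g (bxor x x')) = (-1)^bdot x' s * fourier n g s"
    if x': "x' \<in> bits n" for x'
  proof -
    have "(\<Sum>x\<in>bits n. (-1::real)^bdot x s * g (bxor x x'))
        = (\<Sum>y\<in>bits n. (-1)^bdot (bxor x' y) s * g (bxor (bxor x' y) x'))"
      using sum_bxor_reindex[OF x', of "\<lambda>x. (-1::real)^bdot x s * g (bxor x x')"] by simp
    also have "\<dots> = (\<Sum>y\<in>bits n. (-1)^bdot x' s * ((-1)^bdot y s * g y))"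
      by (rule sum.cong) (use x' in \<open>auto simp: sign_bxor1 bxor_comm[of _ x'] bxor_inv bits_mem\<close>)
    finally show ?thesis by (simp add: fourier_def sum_distrib_left)
  qed
  have "fourier n (conv n f g) s = (\<Sum>x\<in>bits n. \<Sum>x'\<in>bits n. (-1)^bdot x s * (f x' * g (bxor x x')))"
    by (simp add: fourier_def conv_def sum_distrib_left)
  also have "\<dots> = (\<Sum>x'\<in>bits n. f x' * (\<Sum>x\<in>bits n. (-1)^bdot x s * g (bxor x x')))"
    by (subst sum.swap) (simp add: sum_distrib_left mult_ac)
  also have "\<dots> = (\<Sum>x'\<in>bits n. f x' * ((-1)^bdot x' s * fourier n g s))"
    by (rule sum.cong) (simp_all add: inner)
  also have "\<dots> = fourier n f s * fourier n g s"
    by (simp add: fourier_def sum_distrib_right mult_ac)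
  finally show ?thesis .
qed

lemma fourier_conv_pow: "fourier n (conv_pow n f k) s = fourier n f s ^ k"
proof (induction k)
  case 0
  have "fourier n (conv_pow n f 0) s = (\<Sum>x\<in>bits n. if x = replicate n False then 1 else 0)"
    unfolding fourier_def by (rule sum.cong) auto
  then show ?case by (simp add: bits_mem)
next
  case (Suc k) then show ?case by (simp add: fourier_conv)
qed

lemma conv_pow_ifourier: "x \<in> bits n \<Longrightarrow> conv_pow n f k x = ifourier n (\<lambda>s. fourier n f s ^ k) x"
proof -
  assume x: "x \<in> bits n"
  have "fourier n (conv_pow n f k) = (\<lambda>s. fourier n f s ^ k)" by (rule ext) (rule fourier_conv_pow)
  then show ?thesis using ifourier_fourier[OF x, of "conv_pow n f k"] by simp
qed


definition Qp :: "(bool list \<Rightarrow> complex) \<Rightarrow> nat \<Rightarrow> bool list \<Rightarrow> (nat \<Rightarrow> bool list) \<Rightarrow> complex" where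
  "Qp \<psi> t s r = (\<Prod>k<2*t. \<psi> (swap_reg t s r k))"

definition Hp :: "(bool list \<Rightarrow> complex) \<Rightarrow> bool list \<Rightarrow> bool list \<Rightarrow> bool list \<Rightarrow> bool list \<Rightarrow> complex" where
  "Hp \<psi> s s' a b = \<psi> (swap_first s a b) * \<psi> (swap_first s b a) *
     cnj (\<psi> (swap_first s' a b) * \<psi> (swap_first s' b a))"

definition Mp :: "(bool list \<Rightarrow> complex) \<Rightarrow> nat \<Rightarrow> bool list \<Rightarrow> bool list \<Rightarrow> complex" where
  "Mp \<psi> n s s' = (\<Sum>a\<in>bits n. \<Sum>b\<in>bits n. Hp \<psi> s s' a b)"

definition mp :: "(bool list \<Rightarrow> complex) \<Rightarrow> nat \<Rightarrow> bool list \<Rightarrow> complex" where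
  "mp \<psi> n u = (\<Sum>a\<in>bits n. \<Sum>b\<in>bits n. \<psi> a * \<psi> b *
     cnj (\<psi> (swap_first u a b) * \<psi> (swap_first u b a)))"

lemma had_init: "hadamard_grp n (init_state n t \<psi>) x r =
   complex_of_real (1 / sqrt (2 ^ n)) * (\<Prod>k<2*t. \<psi> (r k))"
proof -
  have "(\<Sum>s\<in>bits n. (-1)^bdot x s * init_state n t \<psi> s r) =
     (\<Sum>s\<in>bits n. if s = replicate n False then (\<Prod>k<2*t. \<psi> (r k)) else 0)"
    by (rule sum.cong) (auto simp: init_state_def)
  also have "\<dots> = (\<Prod>k<2*t. \<psi> (r k))" by (simp add: bits_mem)
  finally show ?thesis by (simp add: hadamard_grp_def)
qed

lemma final_formula: "hidden_cut_final n t \<psi> x r =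
   complex_of_real (1/2^n) * (\<Sum>s\<in>bits n. (-1)^bdot x s * Qp \<psi> t s r)"
proof -
  obtain c where c: "c = complex_of_real (1 / sqrt (2 ^ n))" by blast
  have "hidden_cut_final n t \<psi> x r = c * (\<Sum>s\<in>bits n. (-1)^bdot x s * (c * Qp \<psi> t s r))"
    unfolding hidden_cut_final_def hadamard_grp_def[of n "ctrl_swap t (hadamard_grp n (init_state n t \<psi>))"]
    by (simp add: ctrl_swap_def had_init Qp_def c)
  also have "\<dots> = (c * c) * (\<Sum>s\<in>bits n. (-1)^bdot x s * Qp \<psi> t s r)"
    by (simp only: sum_distrib_left mult_ac)
  also have "c * c = complex_of_real (1/2^n)"
  proof -
    have "1 / sqrt (2 ^ n) * (1 / sqrt (2 ^ n)) = (1/2^n::real)"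
      by (simp add: field_simps)
    then show ?thesis unfolding c by (metis of_real_mult)
  qed
  finally show ?thesis .
qed

lemma swap_reg_upd: "k < 2*t \<Longrightarrow>
   swap_reg (Suc t) s (g(2*t := a, Suc (2*t) := b)) k = swap_reg t s g k"
proof -
  assume k: "k < 2*t"
  have "even k \<Longrightarrow> Suc k < 2*t" using k by presburger
  then show ?thesis using k by (auto simp: swap_reg_def)
qed

lemma Qp_Suc: "Qp \<psi> (Suc t) s (g(2*t := a, Suc (2*t) := b)) =
   Qp \<psi> t s g * \<psi> (swap_first s a b) * \<psi> (swap_first s b a)"
proof -
  have e: "2 * Suc t = Suc (Suc (2*t))" by simp
  have "(\<Prod>k<2*t. \<psi> (swap_reg (Suc t) s (g(2*t := a, Suc (2*t) := b)) k)) = Qp \<psi> t s g"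
    unfolding Qp_def by (rule prod.cong) (simp_all add: swap_reg_upd)
  moreover have "swap_reg (Suc t) s (g(2*t := a, Suc (2*t) := b)) (2*t) = swap_first s a b"
    by (simp add: swap_reg_def)
  moreover have "swap_reg (Suc t) s (g(2*t := a, Suc (2*t) := b)) (Suc (2*t)) = swap_first s b a"
    by (simp add: swap_reg_def)
  ultimately show ?thesis unfolding Qp_def[of \<psi> "Suc t"] e by (simp add: mult.assoc)
qed

lemma sum_PiE_insert: "i \<notin> I \<Longrightarrow>
  (\<Sum>r\<in>PiE (insert i I) B. F r) = (\<Sum>y\<in>B i. \<Sum>g\<in>PiE I B. F (g(i := y)))"
proof -
  assume i: "i \<notin> I"
  have "(\<Sum>r\<in>PiE (insert i I) B. F r) = (\<Sum>p\<in>B i \<times> PiE I B. F ((\<lambda>(y,g). g(i:=y)) p))"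
    unfolding PiE_insert_eq by (simp add: sum.reindex[OF inj_combinator[OF i]])
  also have "\<dots> = (\<Sum>y\<in>B i. \<Sum>g\<in>PiE I B. F (g(i := y)))"
    unfolding sum.cartesian_product by (rule sum.cong) auto
  finally show ?thesis .
qed

lemma Mp_swap: "Mp \<psi> n s s' = (\<Sum>b\<in>bits n. \<Sum>a\<in>bits n. Hp \<psi> s s' a b)"
  unfolding Mp_def by (rule sum.swap)

lemma Msum: "(\<Sum>r\<in>reg_basis n t. Qp \<psi> t s r * cnj (Qp \<psi> t s' r)) = Mp \<psi> n s s' ^ t"
proof (induction t)
  case 0 show ?case by (simp add: reg_basis_def Qp_def)
next
  case (Suc t)
  let ?B = "\<lambda>_::nat. bits n"
  let ?S = "\<Sum>g\<in>PiE {..<2*t} ?B. Qp \<psi> t s g * cnj (Qp \<psi> t s' g)"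
  have dom: "{..<2 * Suc t} = insert (Suc (2*t)) (insert (2*t) {..<2*t})" by auto
  have "(\<Sum>r\<in>reg_basis n (Suc t). Qp \<psi> (Suc t) s r * cnj (Qp \<psi> (Suc t) s' r))
     = (\<Sum>b\<in>bits n. \<Sum>a\<in>bits n. \<Sum>g\<in>PiE {..<2*t} ?B.
          Qp \<psi> (Suc t) s (g(2*t := a, Suc(2*t) := b)) * cnj (Qp \<psi> (Suc t) s' (g(2*t := a, Suc(2*t) := b))))"
    unfolding reg_basis_def dom by (simp add: sum_PiE_insert)
  also have "\<dots> = (\<Sum>b\<in>bits n. \<Sum>a\<in>bits n. \<Sum>g\<in>PiE {..<2*t} ?B.
          (Qp \<psi> t s g * cnj (Qp \<psi> t s' g)) * Hp \<psi> s s' a b)"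
    by (simp only: Qp_Suc Hp_def complex_cnj_mult) (simp add: mult_ac)
  also have "\<dots> = (\<Sum>b\<in>bits n. \<Sum>a\<in>bits n. ?S * Hp \<psi> s s' a b)"
    by (simp add: sum_distrib_right)
  also have "\<dots> = ?S * Mp \<psi> n s s'"
    by (simp add: Mp_swap sum_distrib_left)
  finally show ?case using Suc.IH by (simp add: reg_basis_def mult.commute)
qed

lemma sw_sw: "length s = length a \<Longrightarrow> length s' = length a \<Longrightarrow> length b = length a \<Longrightarrow>
  swap_first s' (swap_first s a b) (swap_first s b a) = swap_first (bxor s s') a b"
proof (induction a arbitrary: s s' b)
  case (Cons c a)
  then show ?case by (cases s; cases s'; cases b) auto
qed simp

lemma sw_inv: "length s = length a \<Longrightarrow> length b = length a \<Longrightarrow>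
  swap_first s (swap_first s a b) (swap_first s b a) = a"
proof (induction a arbitrary: s b)
  case (Cons c a)
  then show ?case by (cases s; cases b) auto
qed simp

lemma sw_rep: "length s = length a \<Longrightarrow> length b = length a \<Longrightarrow>
  swap_first (bxor s s) a b = a"
proof (induction a arbitrary: s b)
  case (Cons c a)
  then show ?case by (cases s; cases b) auto
qed simp

lemma Mp_mp: "s \<in> bits n \<Longrightarrow> s' \<in> bits n \<Longrightarrow> Mp \<psi> n s s' = mp \<psi> n (bxor s s')"
proof -
  assume s: "s \<in> bits n" and s': "s' \<in> bits n"
  let ?\<phi> = "\<lambda>(a,b). (swap_first s a b, swap_first s b a)"
  have "Mp \<psi> n s s' = (\<Sum>(a,b)\<in>bits n \<times> bits n. Hp \<psi> s s' a b)"
    unfolding Mp_def by (rule sum.cartesian_product)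
  also have "\<dots> = (\<Sum>(a,b)\<in>bits n \<times> bits n. \<psi> a * \<psi> b *
     cnj (\<psi> (swap_first (bxor s s') a b) * \<psi> (swap_first (bxor s s') b a)))"
    by (rule sym, rule sum.reindex_bij_witness[of _ ?\<phi> ?\<phi>])
      (use s s' in \<open>auto simp: Hp_def sw_sw sw_inv sw_rep bits_mem\<close>)
  also have "\<dots> = mp \<psi> n (bxor s s')" unfolding mp_def by (rule sum.cartesian_product[symmetric])
  finally show ?thesis .
qed


lemma sum_swap3: "(\<Sum>r\<in>R. \<Sum>s\<in>B. \<Sum>s'\<in>C. f r s s') = (\<Sum>s\<in>B. \<Sum>s'\<in>C. \<Sum>r\<in>R. f r s s')"
  by (subst sum.swap) (rule sum.cong[OF refl], rule sum.swap)

lemma pt_formula: "complex_of_real (hidden_cut_dist n t \<psi> x) =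
   complex_of_real (1/2^n) * (\<Sum>u\<in>bits n. (-1)^bdot x u * mp \<psi> n u ^ t)"
proof -
  obtain c where c: "c = complex_of_real (1/2^n)" by blast
  define S where "S r = (\<Sum>s\<in>bits n. (-1)^bdot x s * Qp \<psi> t s r)" for r
  have cnjc: "cnj c = c" unfolding c by simp
  have prodS: "S r * cnj (S r) = (\<Sum>s\<in>bits n. \<Sum>s'\<in>bits n.
      (-1)^bdot x s * (-1)^bdot x s' * (Qp \<psi> t s r * cnj (Qp \<psi> t s' r)))" for r
    unfolding S_def by (simp add: sum_product mult_ac)
  have "complex_of_real (hidden_cut_dist n t \<psi> x) =
      (\<Sum>r\<in>reg_basis n t. hidden_cut_final n t \<psi> x r * cnj (hidden_cut_final n t \<psi> x r))"
    unfolding hidden_cut_dist_def of_real_sum by (rule sum.cong[OF refl], rule complex_norm_square)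
  also have "\<dots> = (\<Sum>r\<in>reg_basis n t. (c * c) * (S r * cnj (S r)))"
    by (rule sum.cong[OF refl]) (simp only: final_formula flip: c S_def, simp add: cnjc mult_ac)
  also have "\<dots> = c * c * (\<Sum>r\<in>reg_basis n t. \<Sum>s\<in>bits n. \<Sum>s'\<in>bits n.
      (-1)^bdot x s * (-1)^bdot x s' * (Qp \<psi> t s r * cnj (Qp \<psi> t s' r)))"
    by (simp only: prodS sum_distrib_left)
  also have "(\<Sum>r\<in>reg_basis n t. \<Sum>s\<in>bits n. \<Sum>s'\<in>bits n.
      (-1)^bdot x s * (-1)^bdot x s' * (Qp \<psi> t s r * cnj (Qp \<psi> t s' r)))
    = (\<Sum>s\<in>bits n. \<Sum>s'\<in>bits n. (-1)^bdot x s * (-1)^bdot x s' * Mp \<psi> n s s' ^ t)"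
    by (simp only: sum_swap3 sum_distrib_left[symmetric] Msum)
  also have "\<dots> = (\<Sum>s\<in>bits n. \<Sum>s'\<in>bits n. (-1)^bdot x (bxor s s') * mp \<psi> n (bxor s s') ^ t)"
    by (intro sum.cong refl) (simp add: sign_bxor Mp_mp bits_mem)
  also have "\<dots> = (\<Sum>s\<in>bits n. \<Sum>u\<in>bits n. (-1)^bdot x u * mp \<psi> n u ^ t)"
    by (rule sum.cong[OF refl], rule sum_bxor_reindex[where h="\<lambda>u. (-1)^bdot x u * mp \<psi> n u ^ t"])
  also have "\<dots> = 2^n * (\<Sum>u\<in>bits n. (-1)^bdot x u * mp \<psi> n u ^ t)"
    by (simp add: card_bits)
  also have "c * c * (2^n * (\<Sum>u\<in>bits n. (-1)^bdot x u * mp \<psi> n u ^ t))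
     = c * (\<Sum>u\<in>bits n. (-1)^bdot x u * mp \<psi> n u ^ t)"
  proof -
    have "c * 2^n = 1" unfolding c by simp
    moreover have "c * c * (2^n * S') = (c * 2^n) * (c * S')" for S' :: complex
      by (simp only: mult_ac)
    ultimately show ?thesis by (simp only: mult_1_left)
  qed
  finally show ?thesis unfolding c .
qed

lemma p1_fourier: "u \<in> bits n \<Longrightarrow>
  complex_of_real (fourier n (hidden_cut_dist n 1 \<psi>) u) = mp \<psi> n u"
proof -
  assume u: "u \<in> bits n"
  have "complex_of_real (fourier n (hidden_cut_dist n 1 \<psi>) u) =
     (\<Sum>x\<in>bits n. (-1)^bdot x u * complex_of_real (hidden_cut_dist n 1 \<psi> x))"
    unfolding fourier_def by simp
  also have "\<dots> = (\<Sum>x\<in>bits n. (-1)^bdot x u *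
      (complex_of_real (1/2^n) * (\<Sum>v\<in>bits n. (-1)^bdot x v * mp \<psi> n v)))"
    by (simp only: pt_formula power_one_right)
  also have "\<dots> = complex_of_real (1/2^n) * (\<Sum>x\<in>bits n. (-1)^bdot x u *
      (\<Sum>v\<in>bits n. (-1)^bdot x v * mp \<psi> n v))"
    by (simp add: sum_distrib_left mult_ac)
  also have "\<dots> = mp \<psi> n u" using Gsum[OF u, of "mp \<psi> n"] by simp
  finally show ?thesis .
qed

theorem mainTheorem3:
  fixes n t :: nat and \<psi> :: "bool list \<Rightarrow> complex"
  assumes "t \<ge> 1"
    and "(\<Sum>x\<in>bits n. (cmod (\<psi> x))\<^sup>2) = 1"
  shows "(\<forall>x\<in>bits n. hidden_cut_dist n t \<psi> x = conv_pow n (hidden_cut_dist n 1 \<psi>) t x)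
       \<and> (\<forall>x\<in>bits n. hidden_cut_dist n t \<psi> x =
             ifourier n (\<lambda>s. (fourier n (hidden_cut_dist n 1 \<psi>) s) ^ t) x)"
proof -
  have main: "hidden_cut_dist n t \<psi> x = ifourier n (\<lambda>s. (fourier n (hidden_cut_dist n 1 \<psi>) s) ^ t) x" for x
  proof -
    have "complex_of_real (ifourier n (\<lambda>s. (fourier n (hidden_cut_dist n 1 \<psi>) s) ^ t) x)
       = complex_of_real (1/2^n) * (\<Sum>s\<in>bits n. (-1)^bdot x s *
            complex_of_real (fourier n (hidden_cut_dist n 1 \<psi>) s) ^ t)"
      unfolding ifourier_def by simp
    also have "\<dots> = complex_of_real (1/2^n) * (\<Sum>s\<in>bits n. (-1)^bdot x s * mp \<psi> n s ^ t)"
      by (rule arg_cong[where f="\<lambda>z. complex_of_real (1/2^n) * z"], rule sum.cong[OF refl])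
        (simp only: p1_fourier)
    also have "\<dots> = complex_of_real (hidden_cut_dist n t \<psi> x)" by (rule pt_formula[symmetric])
    finally show ?thesis by (simp only: of_real_eq_iff)
  qed
  show ?thesis
  proof (intro conjI ballI)
    fix x assume x: "x \<in> bits n"
    show "hidden_cut_dist n t \<psi> x = conv_pow n (hidden_cut_dist n 1 \<psi>) t x"
      by (simp only: main[of x] conv_pow_ifourier[OF x])
  next
    fix x show "hidden_cut_dist n t \<psi> x =
             ifourier n (\<lambda>s. (fourier n (hidden_cut_dist n 1 \<psi>) s) ^ t) x" by (rule main)
  qed
qed

end
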